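(* Let $a,b,c,x,y,t\in\mathbb{C}$ with $|yt|<1$. Let $d,e,xt\in\mathbb{C}\setminus\{q^{-m}:m\ge0\}$. Then $$\sum_{n=0}^\infty\phi_n^{(a,b,c;d,e)}(x,y|q)\frac{(-1)^nq^{\binom n2}t^n}{(q;q)_n}=(xt;q)_\infty\sum_{N=0}^\infty\frac{(-1)^Nq^{\binom N2}(a,b,c;q)_N}{(q,d,e,xt;q)_N}(yt)^N.$$
   Context: Throughout, $0<q<1$. $(\alpha;q)_0=1$, $(\alpha;q)_n=\prod_{j=0}^{n-1}(1-\alpha q^j)$, $(\alpha;q)_\infty=\prod_{j\ge0}(1-\alpha q^j)$, and $(\alpha_1,\dots,\alpha_r;q)_n=\prod_i(\alpha_i;q)_n$. $\begin{bmatrix}n\\k\end{bmatrix}=\frac{(q;q)_n}{(q;q)_k(q;q)_{n-k}}$. $$\phi_n^{(a,b,c;d,e)}(x,y|q)=\sum_{k=0}^n\begin{bmatrix}n\\k\end{bmatrix}\frac{(a,b,c;q)_k}{(d,e;q)_k}x^{n-k}y^k.$$ *)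

theory Defs
  imports "HOL-Analysis.Analysis"
begin

definition qpoch :: "complex \<Rightarrow> real \<Rightarrow> nat \<Rightarrow> complex" where
  "qpoch \<alpha> q n = (\<Prod>j<n. 1 - \<alpha> * of_real q ^ j)"

definition qpoch_inf :: "complex \<Rightarrow> real \<Rightarrow> complex" where
  "qpoch_inf \<alpha> q = (\<Prod>j. 1 - \<alpha> * of_real q ^ j)"

definition qbinom :: "real \<Rightarrow> nat \<Rightarrow> nat \<Rightarrow> complex" where
  "qbinom q n k = qpoch (of_real q) q n / (qpoch (of_real q) q k * qpoch (of_real q) q (n - k))"

definition phi :: "complex \<Rightarrow> complex \<Rightarrow> complex \<Rightarrow> complex \<Rightarrow> complex \<Rightarrow> real
    \<Rightarrow> nat \<Rightarrow> complex \<Rightarrow> complex \<Rightarrow> complex" where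
  "phi a b c d e q n x y = (\<Sum>k\<le>n. qbinom q n k *
      (qpoch a q k * qpoch b q k * qpoch c q k) / (qpoch d q k * qpoch e q k) *
      x ^ (n - k) * y ^ k)"

end

theory Submission
  imports Defs
begin

lemma ratio_summable:
  fixes f :: "nat \<Rightarrow> complex"
  assumes rec: "\<And>n. f (Suc n) = f n * r n" and lim: "r \<longlonglongrightarrow> 0"
  shows "summable (\<lambda>n. norm (f n))"
proof -
  have "eventually (\<lambda>n. norm (r n) < 1/2) sequentially"
    using order_tendstoD(2)[OF tendsto_norm_zero[OF lim], of "1/2"] by simp
  then obtain N where N: "\<And>n. n \<ge> N \<Longrightarrow> norm (r n) < 1/2"
    by (auto simp: eventually_at_top_linorder)
  show ?thesis
  proof (rule summable_ratio_test[of "1/2" N])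
    fix n assume "n \<ge> N"
    then have "norm (f n) * norm (r n) \<le> norm (f n) * (1/2)"
      using N[of n] by (intro mult_left_mono) auto
    then show "norm (norm (f (Suc n))) \<le> 1 / 2 * norm (norm (f n))"
      by (simp add: rec norm_mult)
  qed simp
qed

definition ecoef :: "real \<Rightarrow> nat \<Rightarrow> complex" where
  "ecoef q m = (-1)^m * of_real q ^ (m choose 2) / qpoch (of_real q) q m"

definition ew :: "real \<Rightarrow> complex \<Rightarrow> nat \<Rightarrow> complex" where
  "ew q z m = ecoef q m * z ^ m"

definition eg :: "real \<Rightarrow> complex \<Rightarrow> complex" where
  "eg q z = (\<Sum>m. ew q z m)"

lemma choose2_Suc: "Suc m choose 2 = (m choose 2) + m"
  by (simp add: numeral_2_eq_2)

lemma qpoch_Suc: "qpoch a q (Suc n) = qpoch a q n * (1 - a * of_real q ^ n)"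
  by (simp add: qpoch_def)

lemma qpoch_nz:
  assumes "\<And>j. j < n \<Longrightarrow> a * of_real q ^ j \<noteq> 1"
  shows "qpoch a q n \<noteq> 0"
  using assms unfolding qpoch_def by (auto simp: prod_zero_iff)

lemma qq_pow_ne1:
  assumes "0 < q" "q < 1"
  shows "(of_real q :: complex) * of_real q ^ j \<noteq> 1"
proof
  assume "(of_real q :: complex) * of_real q ^ j = 1"
  then have "of_real (q ^ Suc j) = (of_real 1 :: complex)" by simp
  then have "q ^ Suc j = 1" using of_real_eq_iff by blast
  moreover have "q ^ Suc j < 1"
  proof -
    have "q ^ j \<le> 1" using assms by (intro power_le_one) auto
    then have "q * q ^ j \<le> q * 1" using assms by (intro mult_left_mono) auto
    then show ?thesis using assms by (simp only: power_Suc mult_1_right)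
  qed
  ultimately show False by simp
qed

lemma qpoch_q_nz:
  assumes "0 < q" "q < 1"
  shows "qpoch (of_real q) q n \<noteq> 0"
  by (rule qpoch_nz) (use qq_pow_ne1[OF assms] in auto)

lemma ew_Suc:
  "ew q z (Suc m) = ew q z m * (- (of_real q ^ m * z) / (1 - of_real q * of_real q ^ m))"
  by (simp add: ew_def ecoef_def choose2_Suc qpoch_Suc power_add field_split_simps)

lemma ew_summable:
  assumes "0 < q" "q < 1"
  shows "summable (\<lambda>m. norm (ew q z m))"
proof (rule ratio_summable[of _ "\<lambda>m. - (of_real q ^ m * z) / (1 - of_real q * of_real q ^ m)"])
  show "\<And>n. ew q z (Suc n) = ew q z n * (- (of_real q ^ n * z) / (1 - of_real q * of_real q ^ n))"
    by (rule ew_Suc)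
  have "(\<lambda>m. (of_real q :: complex) ^ m) \<longlonglongrightarrow> 0"
    using assms by (intro LIMSEQ_power_zero) simp
  then have "(\<lambda>m. - (of_real q ^ m * z) / (1 - of_real q * of_real q ^ m)) \<longlonglongrightarrow>
      - (0 * z) / (1 - of_real q * 0)"
    using assms by (intro tendsto_intros) auto
  then show "(\<lambda>m. - (of_real q ^ m * z) / (1 - of_real q * of_real q ^ m)) \<longlonglongrightarrow> 0"
    by simp
qed

lemma eg_sums:
  assumes "0 < q" "q < 1"
  shows "ew q z sums eg q z"
  unfolding eg_def using summable_norm_cancel[OF ew_summable[OF assms]] by (simp add: summable_sums)

lemma ew_mult: "ew q (of_real q * z) m = ew q z m * of_real q ^ m"
  by (simp add: ew_def power_mult_distrib)

lemma eg_fun: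
  assumes "0 < q" "q < 1"
  shows "eg q z = (1 - z) * eg q (of_real q * z)"
proof -
  let ?f = "\<lambda>m. ew q z m - ew q (of_real q * z) m"
  have s1: "?f sums (eg q z - eg q (of_real q * z))"
    by (intro sums_diff eg_sums assms)
  have f0: "?f 0 = 0" by (simp add: ew_def)
  have fs: "?f (Suc j) = - z * ew q (of_real q * z) j" for j
  proof -
    have nz: "1 - (of_real q :: complex) * of_real q ^ j \<noteq> 0"
      using qq_pow_ne1[OF assms, of j] by simp
    have "?f (Suc j) = ew q z (Suc j) * (1 - of_real q * of_real q ^ j)"
      unfolding ew_mult by (simp add: algebra_simps)
    also have "\<dots> = - z * (ew q z j * of_real q ^ j)"
      using nz by (simp add: ew_Suc)
    finally show ?thesis by (simp add: ew_mult)
  qed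
  have "(\<lambda>j. ?f (Suc j)) sums (eg q z - eg q (of_real q * z))"
    using s1 f0 sums_Suc_iff[of ?f] by simp
  then have "(\<lambda>j. - z * ew q (of_real q * z) j) sums (eg q z - eg q (of_real q * z))"
    by (simp only: fs)
  moreover have "(\<lambda>j. - z * ew q (of_real q * z) j) sums (- z * eg q (of_real q * z))"
    by (intro sums_mult eg_sums assms)
  ultimately have "eg q z - eg q (of_real q * z) = - z * eg q (of_real q * z)"
    using sums_unique2 by blast
  then show ?thesis by (simp add: algebra_simps)
qed

lemma eg_iter:
  assumes "0 < q" "q < 1"
  shows "eg q z = qpoch z q n * eg q (of_real q ^ n * z)"
proof (induction n)
  case 0 then show ?case by (simp add: qpoch_def)
next
  case (Suc n)
  have "eg q (of_real q ^ n * z) = (1 - of_real q ^ n * z) * eg q (of_real q * (of_real q ^ n * z))"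
    by (rule eg_fun[OF assms])
  have "eg q z = qpoch z q n * ((1 - of_real q ^ n * z) * eg q (of_real q * (of_real q ^ n * z)))"
    using Suc \<open>eg q (of_real q ^ n * z) = _\<close> by simp
  also have "\<dots> = qpoch z q (Suc n) * eg q (of_real q ^ Suc n * z)"
    by (simp add: qpoch_Suc mult.assoc mult.commute mult.left_commute)
  finally show ?case .
qed

lemma eg_zero: "eg q 0 = 1"
proof -
  have "eg q 0 = (\<Sum>n. ecoef q n * 0 ^ n)" by (simp add: eg_def ew_def)
  also have "\<dots> = ecoef q 0" by (rule powser_zero)
  finally show ?thesis by (simp add: ecoef_def qpoch_def numeral_2_eq_2)
qed

lemma eg_cont:
  assumes "0 < q" "q < 1"
  shows "isCont (eg q) w"
proof -
  have "isCont (\<lambda>x. \<Sum>n. ecoef q n * x ^ n) w"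
    by (rule isCont_powser_converges_everywhere)
       (use summable_norm_cancel[OF ew_summable[OF assms]] in \<open>simp add: ew_def\<close>)
  moreover have "eg q = (\<lambda>x. \<Sum>n. ecoef q n * x ^ n)"
    by (simp add: fun_eq_iff eg_def ew_def)
  ultimately show ?thesis by simp
qed

lemma euler:
  assumes "0 < q" "q < 1"
  shows "(\<lambda>n. qpoch z q n) \<longlonglongrightarrow> eg q z"
proof -
  have "(\<lambda>n. (of_real q :: complex) ^ n) \<longlonglongrightarrow> 0"
    using assms by (intro LIMSEQ_power_zero) simp
  then have "(\<lambda>n. of_real q ^ n * z) \<longlonglongrightarrow> 0 * z"
    by (rule tendsto_mult_right)
  then have l: "(\<lambda>n. eg q (of_real q ^ n * z)) \<longlonglongrightarrow> eg q 0"
    using isCont_tendsto_compose[OF eg_cont[OF assms]] by simp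
  then have "(\<lambda>n. eg q z / eg q (of_real q ^ n * z)) \<longlonglongrightarrow> eg q z / eg q 0"
    apply (intro tendsto_intros) using eg_zero[of q] by auto
  then have l2: "(\<lambda>n. eg q z / eg q (of_real q ^ n * z)) \<longlonglongrightarrow> eg q z"
    by (simp add: eg_zero)
  have "eventually (\<lambda>n. eg q (of_real q ^ n * z) \<noteq> 0) sequentially"
    using tendsto_imp_eventually_ne[OF l, of 0] eg_zero[of q] by simp
  then have "eventually (\<lambda>n. eg q z / eg q (of_real q ^ n * z) = qpoch z q n) sequentially"
    by eventually_elim (metis eg_iter[OF assms] nonzero_mult_div_cancel_right)
  then show ?thesis using l2 Lim_transform_eventually by fastforce
qed

lemma qpoch_inf_eg:
  assumes "0 < q" "q < 1"
  shows "qpoch_inf z q = eg q z"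
proof -
  let ?f = "\<lambda>j. 1 - z * of_real q ^ j"
  have "summable (\<lambda>j. norm z * q ^ j)"
    using assms by (intro summable_mult summable_geometric) auto
  then have "summable (\<lambda>j. norm (?f j - 1))"
    using assms by (simp add: norm_mult norm_power)
  then have cp: "convergent_prod ?f"
    by (intro abs_convergent_prod_imp_convergent_prod summable_imp_abs_convergent_prod)
  have "(\<lambda>n. \<Prod>i\<le>n. ?f i) \<longlonglongrightarrow> prodinf ?f"
    by (rule convergent_prod_LIMSEQ[OF cp])
  then have "(\<lambda>n. qpoch z q (Suc n)) \<longlonglongrightarrow> qpoch_inf z q"
    by (simp add: qpoch_def qpoch_inf_def lessThan_Suc_atMost)
  moreover have "(\<lambda>n. qpoch z q (Suc n)) \<longlonglongrightarrow> eg q z"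
    using euler[OF assms] by (rule LIMSEQ_Suc)
  ultimately show ?thesis using LIMSEQ_unique by blast
qed


lemma choose2_add: "(k + m) choose 2 = (k choose 2) + (m choose 2) + k * m"
  by (induction m) (simp_all add: choose2_Suc[unfolded numeral_2_eq_2] numeral_2_eq_2)

lemma nz_from_hyp:
  assumes "0 < q" "\<forall>m::nat. d \<noteq> 1 / of_real q ^ m"
  shows "1 - d * (of_real q :: complex) ^ j \<noteq> 0"
proof
  assume "1 - d * (of_real q :: complex) ^ j = 0"
  then have "d * of_real q ^ j = 1" by simp
  moreover have "(of_real q :: complex) ^ j \<noteq> 0" using assms by simp
  ultimately have "d = 1 / of_real q ^ j" by (simp add: field_simps)
  then show False using assms by blast
qed

lemma qpoch_nz_hyp:
  assumes "0 < q" "\<forall>m::nat. d \<noteq> 1 / of_real q ^ m"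
  shows "qpoch d q k \<noteq> 0"
  using nz_from_hyp[OF assms] unfolding qpoch_def by (auto simp: prod_zero_iff)

lemma term_eq:
  fixes A D xt yt x y t qq :: complex and Q :: "nat \<Rightarrow> complex"
  assumes "Q k \<noteq> 0" "Q m \<noteq> 0" "Q (k+m) \<noteq> 0" "D \<noteq> 0"
  shows "Q (k+m) / (Q k * Q (k + m - k)) * A / D * x ^ (k + m - k) * y ^ k *
           (-1) ^ (k+m) * qq ^ ((k+m) choose 2) * t ^ (k+m) / Q (k+m)
       = ((-1)^k * qq ^ (k choose 2) * A / (Q k * D) * (y * t) ^ k) *
         ((-1)^m * qq ^ (m choose 2) / Q m * (qq ^ k * (x * t)) ^ m)"
  using assms by (simp add: choose2_add power_add power_mult_distrib power_mult field_simps)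

theorem corollary1:
  fixes a b c d e x y t :: complex and q :: real
  assumes "0 < q" "q < 1"
    and "norm (y * t) < 1"
    and "\<forall>m::nat. d \<noteq> 1 / of_real q ^ m"
    and "\<forall>m::nat. e \<noteq> 1 / of_real q ^ m"
    and "\<forall>m::nat. x * t \<noteq> 1 / of_real q ^ m"
  shows "(\<lambda>n. phi a b c d e q n x y * (-1) ^ n * of_real q ^ (n choose 2) * t ^ n
              / qpoch (of_real q) q n)
         sums (qpoch_inf (x * t) q *
           (\<Sum>N. (-1) ^ N * of_real q ^ (N choose 2) * (qpoch a q N * qpoch b q N * qpoch c q N)
              / (qpoch (of_real q) q N * qpoch d q N * qpoch e q N * qpoch (x * t) q N)
              * (y * t) ^ N))"
proof -
  note qq = assms(1,2)
  define Q where "Q k = qpoch (of_real q) q k" for k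
  define U where "U k = (-1)^k * of_real q ^ (k choose 2) * (qpoch a q k * qpoch b q k * qpoch c q k)
      / (Q k * (qpoch d q k * qpoch e q k)) * (y * t) ^ k" for k
  define R where "R N = (-1) ^ N * of_real q ^ (N choose 2) * (qpoch a q N * qpoch b q N * qpoch c q N)
              / (qpoch (of_real q) q N * qpoch d q N * qpoch e q N * qpoch (x * t) q N)
              * (y * t) ^ N" for N
  define F where "F p = U (fst p) * ew q (of_real q ^ fst p * (x * t)) (snd p)" for p
  have Qnz: "Q k \<noteq> 0" for k unfolding Q_def by (rule qpoch_q_nz[OF qq])
  have dnz: "qpoch d q k \<noteq> 0" "1 - d * of_real q ^ k \<noteq> 0" for k
    using qpoch_nz_hyp[OF assms(1,4)] nz_from_hyp[OF assms(1,4)] by auto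
  have enz: "qpoch e q k \<noteq> 0" "1 - e * of_real q ^ k \<noteq> 0" for k
    using qpoch_nz_hyp[OF assms(1,5)] nz_from_hyp[OF assms(1,5)] by auto
  have xnz: "qpoch (x*t) q k \<noteq> 0" for k
    using qpoch_nz_hyp[OF assms(1,6)] by auto
  have q1nz: "1 - of_real q * (of_real q :: complex) ^ k \<noteq> 0" for k
    using qq_pow_ne1[OF qq, of k] by simp

  have sumU: "summable (\<lambda>k. norm (U k))"
  proof (rule ratio_summable[of _ "\<lambda>k. - (of_real q ^ k) * ((1 - a * of_real q ^ k) * (1 - b * of_real q ^ k) * (1 - c * of_real q ^ k))
        / ((1 - of_real q * of_real q ^ k) * ((1 - d * of_real q ^ k) * (1 - e * of_real q ^ k))) * (y * t)"])
    show "U (Suc k) = U k * (- (of_real q ^ k) * ((1 - a * of_real q ^ k) * (1 - b * of_real q ^ k) * (1 - c * of_real q ^ k))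
        / ((1 - of_real q * of_real q ^ k) * ((1 - d * of_real q ^ k) * (1 - e * of_real q ^ k))) * (y * t))" for k
      using Qnz[of k] dnz[of k] enz[of k] q1nz[of k]
      by (simp add: U_def Q_def qpoch_Suc[of _ q k] choose2_Suc power_add field_simps)
    have "(\<lambda>k. (of_real q :: complex) ^ k) \<longlonglongrightarrow> 0"
      using qq by (intro LIMSEQ_power_zero) simp
    then have "(\<lambda>k. - (of_real q ^ k) * ((1 - a * of_real q ^ k) * (1 - b * of_real q ^ k) * (1 - c * of_real q ^ k))
        / ((1 - of_real q * of_real q ^ k) * ((1 - d * of_real q ^ k) * (1 - e * of_real q ^ k))) * (y * t))
        \<longlonglongrightarrow> - 0 * ((1 - a * 0) * (1 - b * 0) * (1 - c * 0))
        / ((1 - of_real q * 0) * ((1 - d * 0) * (1 - e * 0))) * (y * t)"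
      using qq by (intro tendsto_intros) auto
    then show "(\<lambda>k. - (of_real q ^ k) * ((1 - a * of_real q ^ k) * (1 - b * of_real q ^ k) * (1 - c * of_real q ^ k))
        / ((1 - of_real q * of_real q ^ k) * ((1 - d * of_real q ^ k) * (1 - e * of_real q ^ k))) * (y * t))
        \<longlonglongrightarrow> 0" by simp
  qed
  define SV where "SV = (\<Sum>m. norm (ew q (x * t) m))"
  have sumV: "summable (\<lambda>m. norm (ew q (x * t) m))" by (rule ew_summable[OF qq])
  have ewle: "norm (ew q (of_real q ^ k * z) m) \<le> norm (ew q z m)" for k m z
  proof -
    have "ew q (of_real q ^ k * z) m = ew q z m * (of_real q ^ k) ^ m"
      by (simp add: ew_def power_mult_distrib)
    moreover have "norm (((of_real q :: complex) ^ k) ^ m) \<le> 1"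
      using qq by (simp add: norm_power power_le_one)
    ultimately show ?thesis
      by (simp add: norm_mult mult_left_le)
  qed
  have rowsum: "summable (\<lambda>m. norm (F (k, m)))" for k
  proof -
    have "summable (\<lambda>m. norm (ew q (of_real q ^ k * (x * t)) m))"
      by (rule summable_comparison_test'[OF sumV]) (simp add: ewle)
    then show ?thesis unfolding F_def norm_mult fst_conv snd_conv by (rule summable_mult)
  qed
  have rowle: "(\<Sum>m. norm (F (k, m))) \<le> norm (U k) * SV" for k
  proof -
    have "(\<Sum>m. norm (F (k, m))) \<le> (\<Sum>m. norm (U k) * norm (ew q (x * t) m))"
      using rowsum[of k] sumV
      by (intro suminf_le) (auto simp: F_def norm_mult ewle mult_left_mono)
    also have "\<dots> = norm (U k) * SV" unfolding SV_def by (rule suminf_mult[OF sumV])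
    finally show ?thesis .
  qed
  have absF: "(\<lambda>p. norm (F p)) summable_on UNIV"
  proof -
    have "(\<lambda>p. norm (F p)) summable_on Sigma UNIV (\<lambda>_. UNIV)"
    proof (rule Infinite_Sum.abs_summable_on_Sigma_iff[THEN iffD2], intro conjI ballI)
      fix k :: nat
      show "(\<lambda>m. norm (F (k, m))) summable_on UNIV"
        using norm_summable_imp_summable_on[of "\<lambda>m. norm (F (k, m))"] rowsum[of k] by simp
    next
      have inf_eq: "infsum (\<lambda>m. norm (F (k, m))) UNIV = (\<Sum>m. norm (F (k, m)))" for k
        using norm_summable_imp_has_sum[of "\<lambda>m. norm (F (k, m))"] rowsum[of k]
        by (intro infsumI) (simp add: summable_sums)
      have g: "(\<lambda>k. norm (U k) * SV) summable_on UNIV"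
        using norm_summable_imp_summable_on[of "\<lambda>k. norm (U k) * SV"] summable_mult2[OF sumU, of SV]
        by (simp add: SV_def abs_mult suminf_nonneg[OF sumV])
      show "(\<lambda>k. norm (infsum (\<lambda>m. norm (F (k, m))) UNIV)) summable_on UNIV"
        by (rule Infinite_Sum.abs_summable_on_comparison_test'[OF g])
           (simp add: inf_eq rowle suminf_nonneg[OF rowsum])
    qed
    then show ?thesis by simp
  qed
  then have "F summable_on UNIV" by (rule abs_summable_summable)
  then obtain S where FS: "(F has_sum S) UNIV" using summable_on_def by blast

  have rowhs: "((\<lambda>m. F (k, m)) has_sum (U k * eg q (of_real q ^ k * (x * t)))) UNIV" for k
  proof (rule norm_summable_imp_has_sum)
    show "summable (\<lambda>m. norm (F (k, m)))" by (rule rowsum)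
    show "(\<lambda>m. F (k, m)) sums (U k * eg q (of_real q ^ k * (x * t)))"
      unfolding F_def by (simp, intro sums_mult eg_sums[OF qq])
  qed
  have "((\<lambda>k. U k * eg q (of_real q ^ k * (x * t))) has_sum S) UNIV"
    by (rule has_sum_Sigma'[where f=F and a=S and A=UNIV and B="\<lambda>_. UNIV"]) (use FS rowhs in auto)
  moreover have "U k * eg q (of_real q ^ k * (x * t)) = qpoch_inf (x * t) q * R k" for k
  proof -
    have "eg q (x * t) = qpoch (x * t) q k * eg q (of_real q ^ k * (x * t))"
      by (rule eg_iter[OF qq])
    then have "eg q (of_real q ^ k * (x * t)) = eg q (x * t) / qpoch (x * t) q k"
      using xnz[of k] by (simp add: field_simps)
    then show ?thesis
      unfolding qpoch_inf_eg[OF qq] U_def R_def Q_def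
      using Qnz[of k, unfolded Q_def] dnz(1)[of k] enz(1)[of k] xnz[of k]
      by (simp add: field_simps)
  qed
  ultimately have rowsums: "(\<lambda>k. qpoch_inf (x * t) q * R k) sums S"
    by (simp add: has_sum_imp_sums)

  define h where "h p = (snd p, fst p - snd p)" for p :: "nat \<times> nat"
  have bij: "bij_betw h (Sigma UNIV atMost) UNIV"
    by (rule bij_betwI[where g = "\<lambda>p. (fst p + snd p, fst p)"]) (auto simp: h_def)
  have "((\<lambda>p. F (h p)) has_sum S) (Sigma UNIV atMost)"
    using has_sum_reindex_bij_betw[OF bij, of F S] FS by simp
  then have diag: "((\<lambda>n. \<Sum>k\<le>n. F (k, n - k)) has_sum S) UNIV"
    by (rule has_sum_Sigma'[where a=S and A=UNIV and B=atMost]) (auto simp: h_def intro: has_sum_finite)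
  have termeq: "(\<Sum>k\<le>n. F (k, n - k)) = phi a b c d e q n x y * (-1) ^ n * of_real q ^ (n choose 2) * t ^ n
              / qpoch (of_real q) q n" for n
  proof -
    have "phi a b c d e q n x y * (-1) ^ n * of_real q ^ (n choose 2) * t ^ n / qpoch (of_real q) q n
      = (\<Sum>k\<le>n. qbinom q n k * (qpoch a q k * qpoch b q k * qpoch c q k) / (qpoch d q k * qpoch e q k) *
      x ^ (n - k) * y ^ k * (-1) ^ n * of_real q ^ (n choose 2) * t ^ n / qpoch (of_real q) q n)"
      unfolding phi_def by (simp add: sum_distrib_right sum_divide_distrib)
    also have "\<dots> = (\<Sum>k\<le>n. F (k, n - k))"
    proof (rule sum.cong[OF refl])
      fix k assume "k \<in> {..n}"
      then obtain m where n: "n = k + m" by (metis atMost_iff le_Suc_ex)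
      show "qbinom q n k * (qpoch a q k * qpoch b q k * qpoch c q k) / (qpoch d q k * qpoch e q k) *
      x ^ (n - k) * y ^ k * (-1) ^ n * of_real q ^ (n choose 2) * t ^ n / qpoch (of_real q) q n = F (k, n - k)"
        unfolding n F_def U_def ew_def ecoef_def qbinom_def fst_conv snd_conv
        using term_eq[of Q k m "qpoch d q k * qpoch e q k" "qpoch a q k * qpoch b q k * qpoch c q k" x y "of_real q" t]
          Qnz dnz(1)[of k] enz(1)[of k]
        by (simp add: Q_def mult.assoc)
    qed
    finally show ?thesis by simp
  qed
  have lhs: "(\<lambda>n. phi a b c d e q n x y * (-1) ^ n * of_real q ^ (n choose 2) * t ^ n
              / qpoch (of_real q) q n) sums S"
    using has_sum_imp_sums[OF diag] by (simp add: termeq)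
  have "S = qpoch_inf (x * t) q * (\<Sum>N. R N)"
  proof (cases "qpoch_inf (x * t) q = 0")
    case True
    then show ?thesis using rowsums sums_unique2[OF _ sums_zero] by simp
  next
    case False
    have "summable (\<lambda>k. qpoch_inf (x * t) q * R k)" using rowsums by (rule sums_summable)
    then have "summable R" using False summable_mult[of "\<lambda>k. qpoch_inf (x * t) q * R k" "1 / qpoch_inf (x * t) q"]
      by simp
    then show ?thesis using rowsums suminf_mult[of R "qpoch_inf (x * t) q"] sums_unique by metis
  qed
  then show ?thesis using lhs unfolding R_def by simp
qed

end
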